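(* Consider a unit dual quaternion $\underline{\boldsymbol{x}}=\boldsymbol{r}+\varepsilon\frac{1}{2}\boldsymbol{p}\boldsymbol{r}$, with $\boldsymbol{r}\in\mathbb{S}^{3}$ and $\boldsymbol{p}\in\mathbb{H}_{p}$. Then \[ \operatorname{vec}_{8}\dot{\underline{\boldsymbol{x}}}=\underbrace{\begin{bmatrix}\boldsymbol{Q}\left(\boldsymbol{r}\right) & \boldsymbol{0}_{4\times3}\\ \frac{1}{2}\overset{+}{\boldsymbol{H}}_{4}\left(\boldsymbol{p}\right)\boldsymbol{Q}\left(\boldsymbol{r}\right) & \overset{-}{\boldsymbol{H}}_{4}\left(\boldsymbol{r}\right)\boldsymbol{Q}_{p} \end{bmatrix}}_{\boldsymbol{Q}_{8}\left(\underline{\boldsymbol{x}}\right)}\operatorname{vec}_{6}\dot{\underline{\boldsymbol{y}}}, \] where $\boldsymbol{Q}\left(\boldsymbol{r}\right)=\frac{\partial\operatorname{vec}_{4}\boldsymbol{r}}{\partial\operatorname{vec}_{3}\boldsymbol{y}}$ with $\boldsymbol{y}=\log\boldsymbol{r}$, $\boldsymbol{Q}_{p}=\begin{bmatrix}\boldsymbol{0}_{1\times3}\\ \boldsymbol{I}_{3}\end{bmatrix}$, and $\underline{\boldsymbol{y}}=\log\underline{\boldsymbol{x}}$. Furthermore, $\boldsymbol{Q}_{8}\left(\underline{\boldsymbol{x}}\right)\in\mathbb{R}^{8\times6}$ has full column rank; therefore $\boldsymbol{Q}_{8}\left(\underline{\boldsymbol{x}}\right)^{+}\boldsymbol{Q}_{8}\left(\underline{\boldsymbol{x}}\right)=\boldsymbol{I}$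 (with $\boldsymbol{Q}_8^{+}=(\boldsymbol{Q}_8^T\boldsymbol{Q}_8)^{-1}\boldsymbol{Q}_8^T$) and $\operatorname{vec}_{8}\dot{\underline{\boldsymbol{x}}}=\boldsymbol{0}$ if and only if $\operatorname{vec}_{6}\dot{\underline{\boldsymbol{y}}}=\boldsymbol{0}$.
   Context: Quaternions are $\boldsymbol{h}=h_{1}+\hat{\imath}h_{2}+\hat{\jmath}h_{3}+\hat{k}h_{4}$ with $\hat{\imath}^{2}=\hat{\jmath}^{2}=\hat{k}^{2}=\hat{\imath}\hat{\jmath}\hat{k}=-1$; $\mathbb{H}_p$ is the set of pure quaternions (zero real part), $\mathbb{S}^3$ the unit-norm quaternions. Dual quaternions are $\underline{\boldsymbol{h}}=\boldsymbol{h}+\varepsilon\boldsymbol{h}'$ with $\varepsilon^{2}=0$, $\varepsilon\neq0$. $\operatorname{vec}_{4}\boldsymbol{h}=[h_1\ h_2\ h_3\ h_4]^T$, $\operatorname{vec}_{8}\underline{\boldsymbol{h}}=[\operatorname{vec}_4\boldsymbol{h}^T\ \operatorname{vec}_4\boldsymbol{h}'^T]^T$; for a pure quaternion $\operatorname{vec}_3$ gives its three imaginary coefficients, and for a pure dual quaternion $\underline{\boldsymbol{h}}=h_{1}\hat{\imath}+h_{2}\hat{\jmath}+h_{3}\hat{k}+\varepsilon(h_{4}\hat{\imath}+h_{5}\hat{\jmath}+h_{6}\hat{k})$, $\operatorname{vec}_6\underline{\boldsymbol{h}}=[h_1\cdots h_6]^T$. The Hamilton operators satisfy $\operatorname{vec}_4(\boldsymbol{h}_1\boldsymbol{h}_2)=\overset{+}{\boldsymbol{H}}_4(\boldsymbol{h}_1)\operatorname{vec}_4\boldsymbol{h}_2=\overset{-}{\boldsymbol{H}}_4(\boldsymbol{h}_2)\operatorname{vec}_4\boldsymbol{h}_1$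 and are $\overset{+}{\boldsymbol{H}}_{4}(\boldsymbol{h})=\begin{bmatrix}h_{1} & -h_{2} & -h_{3} & -h_{4}\\ h_{2} & h_{1} & -h_{4} & h_{3}\\ h_{3} & h_{4} & h_{1} & -h_{2}\\ h_{4} & -h_{3} & h_{2} & h_{1}\end{bmatrix}$, $\overset{-}{\boldsymbol{H}}_{4}(\boldsymbol{h})=\begin{bmatrix}h_{1} & -h_{2} & -h_{3} & -h_{4}\\ h_{2} & h_{1} & h_{4} & -h_{3}\\ h_{3} & -h_{4} & h_{1} & h_{2}\\ h_{4} & h_{3} & -h_{2} & h_{1}\end{bmatrix}$. Write $\boldsymbol{r}=r_1+r_2\hat{\imath}+r_3\hat{\jmath}+r_4\hat{k}=\cos(\phi/2)+\boldsymbol{n}\sin(\phi/2)$ with $\boldsymbol{n}=n_x\hat{\imath}+n_y\hat{\jmath}+n_z\hat{k}$ a unit pure quaternion and $\phi\in[0,2\pi)$; $\log\boldsymbol{r}=\frac{\phi}{2}\boldsymbol{n}$ and $\log\underline{\boldsymbol{x}}=\frac{1}{2}(\phi\boldsymbol{n}+\varepsilon\boldsymbol{p})$. Explicitly, $\boldsymbol{Q}(\boldsymbol{r})=\begin{bmatrix}-r_{2} & -r_{3} & -r_{4}\\ \Gamma n_{x}^{2}+\Theta & \Gamma n_{x}n_{y} & \Gamma n_{x}n_{z}\\ \Gamma n_{y}n_{x} & \Gamma n_{y}^{2}+\Theta & \Gamma n_{y}n_{z}\\ \Gamma n_{z}n_{x} & \Gamma n_{z}n_{y} & \Gamma n_{z}^{2}+\Theta\end{bmatrix}$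 with $\Gamma=r_1-\Theta$, $\Theta=\frac{\sin(\phi/2)}{\phi/2}$ for $\phi\neq0$ and $\Theta=1$ for $\phi=0$. *)

theory Defs
  imports "HOL-Analysis.Analysis"
begin

text \<open>Quaternions h = h1 + i h2 + j h3 + k h4 are represented by their coefficient vector
  vec4 h :: real^4 (components \<open>h$1 .. h$4\<close>). Hence vec4 is the identity.
  Dual quaternions h + eps h' are represented as pairs (h, h').\<close>

type_synonym quat = "real^4"
type_synonym dquat = "quat \<times> quat"

definition qmk :: "real \<Rightarrow> real \<Rightarrow> real \<Rightarrow> real \<Rightarrow> quat" where
  "qmk a b c d = vector [a, b, c, d]"

definition qmult :: "quat \<Rightarrow> quat \<Rightarrow> quat" where
  "qmult h g = qmk
     (h$1*g$1 - h$2*g$2 - h$3*g$3 - h$4*g$4)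
     (h$1*g$2 + h$2*g$1 + h$3*g$4 - h$4*g$3)
     (h$1*g$3 - h$2*g$4 + h$3*g$1 + h$4*g$2)
     (h$1*g$4 + h$2*g$3 - h$3*g$2 + h$4*g$1)"

definition qconj :: "quat \<Rightarrow> quat" where
  "qconj h = qmk (h$1) (- h$2) (- h$3) (- h$4)"

definition is_pure :: "quat \<Rightarrow> bool" where
  "is_pure h \<longleftrightarrow> h$1 = 0"

definition is_unit_quat :: "quat \<Rightarrow> bool" where
  "is_unit_quat h \<longleftrightarrow> norm h = 1"

definition dq_of :: "quat \<Rightarrow> quat \<Rightarrow> dquat" where
  "dq_of r p = (r, (1/2) *\<^sub>R qmult p r)"

definition vec8 :: "dquat \<Rightarrow> real^8" where
  "vec8 x = vector [fst x $1, fst x $2, fst x $3, fst x $4,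
                    snd x $1, snd x $2, snd x $3, snd x $4]"

definition vec6 :: "dquat \<Rightarrow> real^6" where
  "vec6 x = vector [fst x $2, fst x $3, fst x $4, snd x $2, snd x $3, snd x $4]"

text \<open>Angle phi in [0, 2pi] and axis n of r = cos(phi/2) + n sin(phi/2).
  When the imaginary part vanishes the axis is irrelevant; we pick i.\<close>
definition qphi :: "quat \<Rightarrow> real" where
  "qphi r = 2 * arccos (r$1)"

definition qaxis :: "quat \<Rightarrow> quat" where
  "qaxis r = (let v = qmk 0 (r$2) (r$3) (r$4) in
              if v = 0 then qmk 0 1 0 0 else (1 / norm v) *\<^sub>R v)"

definition qlog :: "quat \<Rightarrow> quat" where
  "qlog r = (qphi r / 2) *\<^sub>R qaxis r"

text \<open>log x = (1/2)(phi n + eps p) for x = r + eps (1/2) p r, where p = 2 x' r^* .\<close>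
definition dq_log :: "dquat \<Rightarrow> dquat" where
  "dq_log x = (qlog (fst x), (1/2) *\<^sub>R (2 *\<^sub>R qmult (snd x) (qconj (fst x))))"

definition Hplus4 :: "quat \<Rightarrow> real^4^4" where
  "Hplus4 h = vector [
     vector [h$1, - h$2, - h$3, - h$4],
     vector [h$2,   h$1, - h$4,   h$3],
     vector [h$3,   h$4,   h$1, - h$2],
     vector [h$4, - h$3,   h$2,   h$1]]"

definition Hminus4 :: "quat \<Rightarrow> real^4^4" where
  "Hminus4 h = vector [
     vector [h$1, - h$2, - h$3, - h$4],
     vector [h$2,   h$1,   h$4, - h$3],
     vector [h$3, - h$4,   h$1,   h$2],
     vector [h$4,   h$3, - h$2,   h$1]]"

definition Theta :: "quat \<Rightarrow> real" where
  "Theta r = (if qphi r = 0 then 1 else sin (qphi r / 2) / (qphi r / 2))"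

definition Gamma :: "quat \<Rightarrow> real" where
  "Gamma r = r$1 - Theta r"

text \<open>Q(r) = d vec4 r / d vec3 y, y = log r, given explicitly as in the paper.\<close>
definition Qr :: "quat \<Rightarrow> real^3^4" where
  "Qr r = (let n = qaxis r; G = Gamma r; T = Theta r;
               nx = n$2; ny = n$3; nz = n$4 in
     vector [
       vector [- r$2, - r$3, - r$4],
       vector [G*nx*nx + T, G*nx*ny, G*nx*nz],
       vector [G*ny*nx, G*ny*ny + T, G*ny*nz],
       vector [G*nz*nx, G*nz*ny, G*nz*nz + T]])"

definition Qp :: "real^3^4" where
  "Qp = vector [vector [0, 0, 0], vector [1, 0, 0], vector [0, 1, 0], vector [0, 0, 1]]"

definition blk_row :: "real^3 \<Rightarrow> real^3 \<Rightarrow> real^6" where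
  "blk_row a b = vector [a$1, a$2, a$3, b$1, b$2, b$3]"

definition block2x2 :: "real^3^4 \<Rightarrow> real^3^4 \<Rightarrow> real^3^4 \<Rightarrow> real^3^4 \<Rightarrow> real^6^8" where
  "block2x2 A B C D = vector [
     blk_row (A$1) (B$1), blk_row (A$2) (B$2), blk_row (A$3) (B$3), blk_row (A$4) (B$4),
     blk_row (C$1) (D$1), blk_row (C$2) (D$2), blk_row (C$3) (D$3), blk_row (C$4) (D$4)]"

text \<open>Q8(x) for x = r + eps (1/2) p r; p is recovered as p = 2 x' r^* .\<close>
definition Q8 :: "dquat \<Rightarrow> real^6^8" where
  "Q8 x = (let r = fst x; p = 2 *\<^sub>R qmult (snd x) (qconj r) in
     block2x2 (Qr r) 0 ((1/2) *\<^sub>R (Hplus4 p ** Qr r)) (Hminus4 r ** Qp))"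

definition pinv :: "real^'n^'m \<Rightarrow> real^'m^'n" where
  "pinv A = matrix_inv (transpose A ** A) ** transpose A"

end

theory Submission imports Defs begin

lemma exhaust_6: fixes x :: 6 shows "x = 1 \<or> x = 2 \<or> x = 3 \<or> x = 4 \<or> x = 5 \<or> x = 6"
proof (induct x)
  case (of_int z)
  then have "z = 0 \<or> z = 1 \<or> z = 2 \<or> z = 3 \<or> z = 4 \<or> z = 5" by fastforce
  then show ?case by auto
qed
lemma exhaust_8: fixes x :: 8 shows "x = 1 \<or> x = 2 \<or> x = 3 \<or> x = 4 \<or> x = 5 \<or> x = 6 \<or> x = 7 \<or> x = 8"
proof (induct x)
  case (of_int z)
  then have "z = 0 \<or> z = 1 \<or> z = 2 \<or> z = 3 \<or> z = 4 \<or> z = 5 \<or> z = 6 \<or> z = 7" by fastforce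
  then show ?case by auto
qed
lemma UNIV_6: "UNIV = {1, 2, 3, 4, 5, 6::6}" using exhaust_6 by auto
lemma UNIV_8: "UNIV = {1, 2, 3, 4, 5, 6, 7, 8::8}" using exhaust_8 by auto
lemma sum_4: "sum f (UNIV::4 set) = f 1 + f 2 + f 3 + f 4"
  unfolding UNIV_4 by (simp add: ac_simps)
lemma sum_6: "sum f (UNIV::6 set) = f 1 + f 2 + f 3 + f 4 + f 5 + f 6"
  unfolding UNIV_6 by (simp add: ac_simps)
lemma sum_8: "sum f (UNIV::8 set) = f 1 + f 2 + f 3 + f 4 + f 5 + f 6 + f 7 + f 8"
  unfolding UNIV_8 by (simp add: ac_simps)

lemma vector_4 [simp]:
 "(vector [x1,x2,x3,x4] ::('a::zero)^4)$1 = x1"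
 "(vector [x1,x2,x3,x4] ::('a::zero)^4)$2 = x2"
 "(vector [x1,x2,x3,x4] ::('a::zero)^4)$3 = x3"
 "(vector [x1,x2,x3,x4] ::('a::zero)^4)$4 = x4"
  unfolding vector_def by simp_all
lemma vector_6 [simp]:
 "(vector [x1,x2,x3,x4,x5,x6] ::('a::zero)^6)$1 = x1"
 "(vector [x1,x2,x3,x4,x5,x6] ::('a::zero)^6)$2 = x2"
 "(vector [x1,x2,x3,x4,x5,x6] ::('a::zero)^6)$3 = x3"
 "(vector [x1,x2,x3,x4,x5,x6] ::('a::zero)^6)$4 = x4"
 "(vector [x1,x2,x3,x4,x5,x6] ::('a::zero)^6)$5 = x5"
 "(vector [x1,x2,x3,x4,x5,x6] ::('a::zero)^6)$6 = x6"
  unfolding vector_def by simp_all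
lemma vector_8 [simp]:
 "(vector [x1,x2,x3,x4,x5,x6,x7,x8] ::('a::zero)^8)$1 = x1"
 "(vector [x1,x2,x3,x4,x5,x6,x7,x8] ::('a::zero)^8)$2 = x2"
 "(vector [x1,x2,x3,x4,x5,x6,x7,x8] ::('a::zero)^8)$3 = x3"
 "(vector [x1,x2,x3,x4,x5,x6,x7,x8] ::('a::zero)^8)$4 = x4"
 "(vector [x1,x2,x3,x4,x5,x6,x7,x8] ::('a::zero)^8)$5 = x5"
 "(vector [x1,x2,x3,x4,x5,x6,x7,x8] ::('a::zero)^8)$6 = x6"
 "(vector [x1,x2,x3,x4,x5,x6,x7,x8] ::('a::zero)^8)$7 = x7"
 "(vector [x1,x2,x3,x4,x5,x6,x7,x8] ::('a::zero)^8)$8 = x8"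
  unfolding vector_def by simp_all

lemma vec_deriv_iff:
  fixes f :: "real \<Rightarrow> real^'n"
  shows "(f has_vector_derivative v) (at t) \<longleftrightarrow> (\<forall>i. ((\<lambda>s. f s $ i) has_real_derivative v $ i) (at t))"
  apply (simp add: has_vector_derivative_def has_field_derivative_def)
  apply (subst has_derivative_componentwise_within)
  apply (simp add: Basis_vec_def cart_eq_inner_axis[symmetric])
  apply (subgoal_tac "\<And>c. (\<lambda>x::real. x * c) = (*) c")
   apply presburger
  apply (auto simp: mult.commute)
  done

lemma norm4: "norm (x::real^4) = sqrt ((x$1)^2 + (x$2)^2 + (x$3)^2 + (x$4)^2)"
  by (simp add: norm_vec_def L2_set_def sum_4)

lemma qmk_nth[simp]: "qmk a b c d $ 1 = a" "qmk a b c d $ 2 = b" "qmk a b c d $ 3 = c" "qmk a b c d $ 4 = d"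
  by (simp_all add: qmk_def)

lemma quat_eq: "(x::quat) = y \<longleftrightarrow> x$1 = y$1 \<and> x$2 = y$2 \<and> x$3 = y$3 \<and> x$4 = y$4"
  by (auto simp: vec_eq_iff forall_4)

lemma qmult_conj: "qmult (qmult p r) (qconj r) = ((r$1)^2+(r$2)^2+(r$3)^2+(r$4)^2) *\<^sub>R p"
  by (simp add: quat_eq qmult_def qconj_def power2_eq_square algebra_simps)

lemma unit_sq: "is_unit_quat r \<Longrightarrow> (r$1)^2+(r$2)^2+(r$3)^2+(r$4)^2 = 1"
  by (simp add: is_unit_quat_def norm4)

definition nv :: "quat \<Rightarrow> real" where "nv r = sqrt ((r$2)^2+(r$3)^2+(r$4)^2)"

lemma nv_zero_iff: "nv r = 0 \<longleftrightarrow> r$2 = 0 \<and> r$3 = 0 \<and> r$4 = 0"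
  by (simp add: nv_def add_nonneg_eq_0_iff)

lemma qlog_zero:
  assumes u: "is_unit_quat r" and ne: "r \<noteq> qmk (-1) 0 0 0" and z: "nv r = 0"
  shows "r$1 = 1" "qphi r = 0" "qlog r = 0" "Theta r = 1" "Gamma r = 0"
proof -
  have z2: "r$2 = 0" "r$3 = 0" "r$4 = 0" using z nv_zero_iff by auto
  have "(r$1)^2 = 1" using unit_sq[OF u] z2 by simp
  hence "r$1 = 1 \<or> r$1 = -1" by (simp add: power2_eq_1_iff)
  moreover have "r$1 \<noteq> -1" using ne z2 by (auto simp: quat_eq)
  ultimately show r1: "r$1 = 1" by simp
  show ph: "qphi r = 0" by (simp add: qphi_def r1)
  show "qlog r = 0" by (simp add: qlog_def ph)
  show th: "Theta r = 1" by (simp add: Theta_def ph)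
  show "Gamma r = 0" by (simp add: Gamma_def th r1)
qed

lemma qlog_nz:
  assumes u: "is_unit_quat r" and z: "nv r \<noteq> 0"
  shows "qphi r / 2 = arccos (r$1)" "arccos (r$1) > 0" "sin (arccos (r$1)) = nv r"
    "cos (arccos (r$1)) = r$1"
    "qaxis r $ 2 = r$2 / nv r" "qaxis r $ 3 = r$3 / nv r" "qaxis r $ 4 = r$4 / nv r"
    "qlog r $ 1 = 0"
    "qlog r $ 2 = arccos (r$1) * r$2 / nv r" "qlog r $ 3 = arccos (r$1) * r$3 / nv r"
    "qlog r $ 4 = arccos (r$1) * r$4 / nv r"
    "Theta r = sin (arccos (r$1)) / arccos (r$1)"
proof -
  have s: "(r$1)^2 + (nv r)^2 = 1" using unit_sq[OF u] by (simp add: nv_def)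
  have "nv r \<ge> 0" by (simp add: nv_def)
  hence np: "nv r > 0" using z by simp
  have "(r$1)^2 < 1" using s np by (smt (verit) zero_less_power2)
  hence "\<bar>r$1\<bar> < 1" by (simp add: abs_square_less_1)
  hence b: "-1 < r$1" "r$1 < 1" by auto
  show "qphi r / 2 = arccos (r$1)" by (simp add: qphi_def)
  have cc: "cos (arccos (r$1)) = r$1" using b by simp
  have "arccos (r$1) \<noteq> 0" using b cc by force
  moreover have "arccos (r$1) \<ge> 0" using b by (intro arccos_lbound) auto
  ultimately show ap: "arccos (r$1) > 0" by simp
  have "sin (arccos (r$1)) = sqrt (1 - (r$1)^2)" using b by (intro sin_arccos_abs) auto
  also have "... = nv r" using s np by (simp add: eq_diff_eq' real_sqrt_unique)
  finally show "sin (arccos (r$1)) = nv r" .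
  show "cos (arccos (r$1)) = r$1" using b by simp
  have v: "qmk 0 (r$2) (r$3) (r$4) \<noteq> 0" using z nv_zero_iff by (auto simp: quat_eq)
  have nn: "norm (qmk 0 (r$2) (r$3) (r$4)) = nv r" by (simp add: norm4 nv_def)
  show a2: "qaxis r $ 2 = r$2 / nv r" "qaxis r $ 3 = r$3 / nv r" "qaxis r $ 4 = r$4 / nv r"
    using v nn by (simp_all add: qaxis_def Let_def)
  have a1: "qaxis r $ 1 = 0" using v nn by (simp add: qaxis_def Let_def)
  show "qlog r $ 1 = 0" by (simp add: qlog_def a1)
  show "qlog r $ 2 = arccos (r$1) * r$2 / nv r" "qlog r $ 3 = arccos (r$1) * r$3 / nv r"
    "qlog r $ 4 = arccos (r$1) * r$4 / nv r"
    by (simp_all add: qlog_def a2 qphi_def)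
  show "Theta r = sin (arccos (r$1)) / arccos (r$1)" using ap by (simp add: Theta_def qphi_def)
qed

lemma r_repr0:
  assumes u: "is_unit_quat r" and ne: "r \<noteq> qmk (-1) 0 0 0"
    and th_def: "th = sqrt ((qlog r $ 2)^2 + (qlog r $ 3)^2 + (qlog r $ 4)^2)"
  shows "th = arccos (r$1) \<and> r$1 = cos th \<and> r$2 = sin th * qlog r $ 2 / th \<and>
    r$3 = sin th * qlog r $ 3 / th \<and> r$4 = sin th * qlog r $ 4 / th"
proof (cases "nv r = 0")
  case True
  note z = qlog_zero[OF u ne True]
  have z2: "r$2 = 0" "r$3 = 0" "r$4 = 0" using True nv_zero_iff by auto
  show ?thesis by (simp add: th_def z z2)
next
  case False
  note f = qlog_nz[OF u False]
  have "nv r \<ge> 0" by (simp add: nv_def)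
  hence np: "nv r > 0" using False by simp
  have "th = sqrt ((arccos (r$1))^2 * ((r$2)^2 + (r$3)^2 + (r$4)^2) / (nv r)^2)"
    by (simp add: th_def f power_divide power_mult_distrib algebra_simps add_divide_distrib)
  also have "... = sqrt ((arccos (r$1))^2)" using np by (simp add: nv_def)
  also have "... = arccos (r$1)" using f(2) by simp
  finally have th: "th = arccos (r$1)" .
  show ?thesis using f np by (simp add: th)
qed

lemmas r_repr = r_repr0[THEN conjunct1] r_repr0[THEN conjunct2, THEN conjunct1]
  r_repr0[THEN conjunct2, THEN conjunct2, THEN conjunct1]
  r_repr0[THEN conjunct2, THEN conjunct2, THEN conjunct2, THEN conjunct1]
  r_repr0[THEN conjunct2, THEN conjunct2, THEN conjunct2, THEN conjunct2]

definition sinc :: "real \<Rightarrow> real" where "sinc x = (if x = 0 then 1 else sin x / x)"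

lemma isCont_sinc0: "isCont sinc 0"
proof -
  have "(sin has_real_derivative 1) (at 0)" using DERIV_sin[of 0] by simp
  hence "((\<lambda>y::real. (sin y - sin 0) / (y - 0)) \<longlongrightarrow> 1) (at 0)" by (simp add: has_field_derivative_iff)
  hence "(sinc \<longlongrightarrow> 1) (at 0)"
    by (rule Lim_transform_eventually) (auto simp: eventually_at_filter sinc_def)
  thus ?thesis by (simp add: isCont_def sinc_def)
qed

lemma deriv_zero_by_bound:
  fixes f h :: "real \<Rightarrow> real"
  assumes b: "\<And>s. \<bar>f s - f t\<bar> \<le> h s" and h0: "h t = 0" and hd: "(h has_real_derivative 0) (at t)"
  shows "(f has_real_derivative 0) (at t)"
proof -
  have "((\<lambda>y. (h y - h t) / (y - t)) \<longlongrightarrow> 0) (at t)" using hd by (simp add: has_field_derivative_iff)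
  hence l: "((\<lambda>y. \<bar>(h y - h t) / (y - t)\<bar>) \<longlongrightarrow> 0) (at t)" using tendsto_rabs by fastforce
  have "((\<lambda>y. (f y - f t) / (y - t)) \<longlongrightarrow> 0) (at t)"
  proof (rule Lim_null_comparison[OF _ l])
    show "\<forall>\<^sub>F x in at t. norm ((f x - f t) / (x - t)) \<le> \<bar>(h x - h t) / (x - t)\<bar>"
    proof (rule always_eventually, rule allI)
      fix x
      have "\<bar>f x - f t\<bar> \<le> \<bar>h x - h t\<bar>" using b[of x] h0 by simp
      thus "norm ((f x - f t) / (x - t)) \<le> \<bar>(h x - h t) / (x - t)\<bar>"
        by (simp add: abs_divide divide_right_mono)
    qed
  qed
  thus ?thesis by (simp add: has_field_derivative_iff)
qed

lemma one_minus_cos: "\<bar>cos (x::real) - 1\<bar> \<le> x^2 / 2"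
proof -
  have "cos x = 1 - 2 * (sin (x/2))^2" using cos_double_sin[of "x/2"] by simp
  moreover have "(sin (x/2))^2 \<le> (x/2)^2" using abs_sin_x_le_abs_x[of "x/2"]
    by (metis abs_ge_zero power2_abs power_mono)
  ultimately show ?thesis by (simp add: power_divide)
qed

lemma mult_zero_deriv:
  fixes f g :: "real \<Rightarrow> real"
  assumes c: "isCont f t" and g0: "g t = 0" and gd: "(g has_real_derivative d) (at t)"
  shows "((\<lambda>s. f s * g s) has_real_derivative (f t * d)) (at t)"
proof -
  obtain l where l: "\<forall>z. g z - g t = l z * (z - t)" "isCont l t" "l t = d"
    using gd DERIV_caratheodory_within[of g d t UNIV] by auto
  show ?thesis
    unfolding DERIV_caratheodory_within[of _ _ t UNIV]
  proof (intro exI conjI allI)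
    fix z show "f z * g z - f t * g t = (f z * l z) * (z - t)" using l(1)[rule_format, of z] g0 by simp
  next
    show "continuous (at t) (\<lambda>z. f z * l z)" using c l(2) by (simp add: continuous_mult)
  qed (simp add: l)
qed

lemma Qr_nth:
  "Qr r $ 1 $ 1 = - r$2" "Qr r $ 1 $ 2 = - r$3" "Qr r $ 1 $ 3 = - r$4"
  "Qr r $ 2 $ 1 = Gamma r * qaxis r $2 * qaxis r $2 + Theta r"
  "Qr r $ 2 $ 2 = Gamma r * qaxis r $2 * qaxis r $3"
  "Qr r $ 2 $ 3 = Gamma r * qaxis r $2 * qaxis r $4"
  "Qr r $ 3 $ 1 = Gamma r * qaxis r $3 * qaxis r $2"
  "Qr r $ 3 $ 2 = Gamma r * qaxis r $3 * qaxis r $3 + Theta r"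
  "Qr r $ 3 $ 3 = Gamma r * qaxis r $3 * qaxis r $4"
  "Qr r $ 4 $ 1 = Gamma r * qaxis r $4 * qaxis r $2"
  "Qr r $ 4 $ 2 = Gamma r * qaxis r $4 * qaxis r $3"
  "Qr r $ 4 $ 3 = Gamma r * qaxis r $4 * qaxis r $4 + Theta r"
  by (simp_all add: Qr_def Let_def)

lemma r_deriv:
  fixes r :: "real \<Rightarrow> quat"
  assumes u: "\<And>s. is_unit_quat (r s)" and ne: "\<And>s. r s \<noteq> qmk (-1) 0 0 0"
    and d2: "((\<lambda>s. qlog (r s) $ 2) has_real_derivative e1) (at t)"
    and d3: "((\<lambda>s. qlog (r s) $ 3) has_real_derivative e2) (at t)"
    and d4: "((\<lambda>s. qlog (r s) $ 4) has_real_derivative e3) (at t)"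
  shows "((\<lambda>s. r s $ 1) has_real_derivative (Qr (r t)$1$1*e1 + Qr (r t)$1$2*e2 + Qr (r t)$1$3*e3)) (at t) \<and>
         ((\<lambda>s. r s $ 2) has_real_derivative (Qr (r t)$2$1*e1 + Qr (r t)$2$2*e2 + Qr (r t)$2$3*e3)) (at t) \<and>
         ((\<lambda>s. r s $ 3) has_real_derivative (Qr (r t)$3$1*e1 + Qr (r t)$3$2*e2 + Qr (r t)$3$3*e3)) (at t) \<and>
         ((\<lambda>s. r s $ 4) has_real_derivative (Qr (r t)$4$1*e1 + Qr (r t)$4$2*e2 + Qr (r t)$4$3*e3)) (at t)"
proof -
  define w2 where "w2 s = qlog (r s) $ 2" for s
  define w3 where "w3 s = qlog (r s) $ 3" for s
  define w4 where "w4 s = qlog (r s) $ 4" for s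
  define g where "g s = (w2 s)^2 + (w3 s)^2 + (w4 s)^2" for s
  define th where "th s = sqrt (g s)" for s
  have rep: "th s = arccos (r s $ 1)" "r s $ 1 = cos (th s)" "r s $ 2 = sin (th s) * w2 s / th s"
    "r s $ 3 = sin (th s) * w3 s / th s" "r s $ 4 = sin (th s) * w4 s / th s" for s
    using r_repr[OF u ne, of "th s" s] by (simp_all add: th_def g_def w2_def w3_def w4_def)
  have f1: "(\<lambda>s. r s $ 1) = (\<lambda>s. cos (th s))" using rep by auto
  have d2': "(w2 has_real_derivative e1) (at t)" using d2 by (simp add: w2_def[abs_def])
  have d3': "(w3 has_real_derivative e2) (at t)" using d3 by (simp add: w3_def[abs_def])
  have d4': "(w4 has_real_derivative e3) (at t)" using d4 by (simp add: w4_def[abs_def])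
  have gd: "(g has_real_derivative (2 * w2 t * e1 + 2 * w3 t * e2 + 2 * w4 t * e3)) (at t)"
    unfolding g_def[abs_def] by (rule derivative_eq_intros d2' d3' d4' refl | simp)+
  show ?thesis
  proof (cases "nv (r t) = 0")
    case True
    note z = qlog_zero[OF u ne True]
    have z2: "r t $2 = 0" "r t $3 = 0" "r t $4 = 0" using True nv_zero_iff by auto
    have w0: "w2 t = 0" "w3 t = 0" "w4 t = 0" using z by (simp_all add: w2_def w3_def w4_def)
    have th0: "th t = 0" by (simp add: th_def g_def w0)
    have Q: "Qr (r t)$1$1 = 0" "Qr (r t)$1$2 = 0" "Qr (r t)$1$3 = 0"
      "Qr (r t)$2$1 = 1" "Qr (r t)$2$2 = 0" "Qr (r t)$2$3 = 0"
      "Qr (r t)$3$1 = 0" "Qr (r t)$3$2 = 1" "Qr (r t)$3$3 = 0"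
      "Qr (r t)$4$1 = 0" "Qr (r t)$4$2 = 0" "Qr (r t)$4$3 = 1"
      by (simp_all add: Qr_nth z z2)
    have gnn: "g s \<ge> 0" for s by (simp add: g_def)
    have D1: "((\<lambda>s. r s $ 1) has_real_derivative 0) (at t)"
    proof (rule deriv_zero_by_bound[where h = "\<lambda>s. g s / 2"])
      fix s
      have "\<bar>cos (th s) - 1\<bar> \<le> (th s)^2 / 2" by (rule one_minus_cos)
      moreover have "(th s)^2 = g s" using gnn[of s] by (simp add: th_def)
      moreover have "cos (th s) \<le> 1" by simp
      ultimately show "\<bar>r s $ 1 - r t $ 1\<bar> \<le> g s / 2" by (simp add: rep(2) th0 abs_if)
    next
      show "g t / 2 = 0" by (simp add: g_def w0)
      show "((\<lambda>s. g s / 2) has_real_derivative 0) (at t)"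
        using DERIV_cdivide[OF gd, of 2] by (simp add: w0)
    qed
    have cth: "isCont th t" unfolding th_def[abs_def] g_def[abs_def]
      using DERIV_isCont[OF d2'] DERIV_isCont[OF d3'] DERIV_isCont[OF d4']
      by (intro continuous_intros) auto
    have cs: "isCont (\<lambda>s. sinc (th s)) t"
      using isCont_o2[OF cth, of sinc] isCont_sinc0 th0 by simp
    have sincrep: "sin (th s) * w / th s = sinc (th s) * w" if "th s = 0 \<longrightarrow> w = 0" for s w
      using that by (auto simp: sinc_def)
    have g0: "th s = 0 \<Longrightarrow> w2 s = 0 \<and> w3 s = 0 \<and> w4 s = 0" for s
      by (simp add: th_def g_def add_nonneg_eq_0_iff)
    have "(\<lambda>s. r s $ 2) = (\<lambda>s. sinc (th s) * w2 s)" "(\<lambda>s. r s $ 3) = (\<lambda>s. sinc (th s) * w3 s)"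
      "(\<lambda>s. r s $ 4) = (\<lambda>s. sinc (th s) * w4 s)"
      using rep sincrep g0 by auto
    moreover have "sinc (th t) = 1" by (simp add: th0 sinc_def)
    ultimately have D2: "((\<lambda>s. r s $ 2) has_real_derivative e1) (at t)"
      "((\<lambda>s. r s $ 3) has_real_derivative e2) (at t)"
      "((\<lambda>s. r s $ 4) has_real_derivative e3) (at t)"
      using mult_zero_deriv[OF cs, of w2 e1] mult_zero_deriv[OF cs, of w3 e2]
        mult_zero_deriv[OF cs, of w4 e3] w0 d2' d3' d4' by auto
    show ?thesis using D1 D2 by (simp add: Q)
  next
    case False
    note f = qlog_nz[OF u False]
    define a where "a = arccos (r t $ 1)"
    define N where "N = nv (r t)"
    have N0: "N \<noteq> 0" using False by (simp add: N_def)
    have a0: "a > 0" using f by (simp add: a_def)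
    have tha: "th t = a" using rep(1) by (simp add: a_def)
    have wt: "w2 t = a * r t $2 / N" "w3 t = a * r t $3 / N" "w4 t = a * r t $4 / N"
      using f by (simp_all add: w2_def w3_def w4_def a_def N_def)
    have sa: "sin a = N" "cos a = r t $ 1" using f by (simp_all add: a_def N_def)
    have gt: "g t > 0" using tha a0 unfolding th_def by (metis real_sqrt_le_0_iff not_less)
    define D where "D = inverse (th t) / 2 * (2 * w2 t * e1 + 2 * w3 t * e2 + 2 * w4 t * e3)"
    have thd: "(th has_real_derivative D) (at t)"
      unfolding th_def[abs_def] D_def using DERIV_chain2[OF DERIV_real_sqrt[OF gt] gd]
      by (simp add: th_def)
    have D1: "((\<lambda>s. r s $ 1) has_real_derivative (- sin (th t) * D)) (at t)"
      unfolding f1 using DERIV_chain2[OF DERIV_cos thd] by simp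
    have gen: "((\<lambda>s. sin (th s) * w s / th s) has_real_derivative
       ((cos (th t) * D * w t + sin (th t) * e) * th t - sin (th t) * w t * D) / (th t * th t)) (at t)"
      if wd: "(w has_real_derivative e) (at t)" for w e
      using DERIV_divide[OF DERIV_mult[OF DERIV_chain2[OF DERIV_sin thd] wd] thd] tha a0 by (simp add: mult.commute)
    have f2: "(\<lambda>s. r s $ 2) = (\<lambda>s. sin (th s) * w2 s / th s)" "(\<lambda>s. r s $ 3) = (\<lambda>s. sin (th s) * w3 s / th s)"
      "(\<lambda>s. r s $ 4) = (\<lambda>s. sin (th s) * w4 s / th s)" using rep by auto
    have Dv: "D = (r t $2 * e1 + r t $3 * e2 + r t $4 * e3) / N"
      using a0 N0 by (simp add: D_def tha wt field_simps)
    have Qv: "Theta (r t) = N / a" "Gamma (r t) = r t $ 1 - N / a"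
      "qaxis (r t) $ 2 = r t $2 / N" "qaxis (r t) $ 3 = r t $3 / N" "qaxis (r t) $ 4 = r t $4 / N"
      using f by (simp_all add: a_def N_def Gamma_def)
    show ?thesis
      unfolding f2
      apply (intro conjI)
         apply (rule DERIV_cong[OF D1]) using a0 N0 apply (simp add: Qr_nth tha sa Dv field_simps)
        apply (rule DERIV_cong[OF gen[OF d2']]) using a0 N0 apply (simp add: Qr_nth Qv tha sa Dv wt field_simps)
        apply (rule DERIV_cong[OF gen[OF d3']]) using a0 N0 apply (simp add: Qr_nth Qv tha sa Dv wt field_simps)
        apply (rule DERIV_cong[OF gen[OF d4']]) using a0 N0 apply (simp add: Qr_nth Qv tha sa Dv wt field_simps)
      done
  qed
qed

lemma qmult_scaleR_left: "qmult (c *\<^sub>R x) y = c *\<^sub>R qmult x y"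
  by (simp add: quat_eq qmult_def algebra_simps)

lemma p_recover: "is_unit_quat r \<Longrightarrow> 2 *\<^sub>R qmult ((1/2) *\<^sub>R qmult p r) (qconj r) = p"
  by (simp add: qmult_scaleR_left qmult_conj unit_sq)

lemma Y_eq: "is_unit_quat r \<Longrightarrow> vec6 (dq_log (dq_of r p)) =
   vector [qlog r $ 2, qlog r $ 3, qlog r $ 4, p$2/2, p$3/2, p$4/2]"
  by (simp add: vec6_def dq_log_def dq_of_def p_recover)

lemma Q8_eq: "is_unit_quat r \<Longrightarrow> Q8 (dq_of r p) =
   block2x2 (Qr r) 0 ((1/2) *\<^sub>R (Hplus4 p ** Qr r)) (Hminus4 r ** Qp)"
  by (simp add: Q8_def dq_of_def p_recover)

lemma forall_6: "(\<forall>i::6. P i) \<longleftrightarrow> P 1 \<and> P 2 \<and> P 3 \<and> P 4 \<and> P 5 \<and> P 6"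
  by (metis exhaust_6)
lemma forall_8: "(\<forall>i::8. P i) \<longleftrightarrow> P 1 \<and> P 2 \<and> P 3 \<and> P 4 \<and> P 5 \<and> P 6 \<and> P 7 \<and> P 8"
  by (metis exhaust_8)

lemma blk_mv:
  fixes A B C D :: "real^3^4"
  shows
  "(block2x2 A B C D *v v) $ 1 = A$1$1* v$1 + A$1$2* v$2 + A$1$3* v$3 + B$1$1* v$4 + B$1$2* v$5 + B$1$3* v$6"
  "(block2x2 A B C D *v v) $ 2 = A$2$1* v$1 + A$2$2* v$2 + A$2$3* v$3 + B$2$1* v$4 + B$2$2* v$5 + B$2$3* v$6"
  "(block2x2 A B C D *v v) $ 3 = A$3$1* v$1 + A$3$2* v$2 + A$3$3* v$3 + B$3$1* v$4 + B$3$2* v$5 + B$3$3* v$6"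
  "(block2x2 A B C D *v v) $ 4 = A$4$1* v$1 + A$4$2* v$2 + A$4$3* v$3 + B$4$1* v$4 + B$4$2* v$5 + B$4$3* v$6"
  "(block2x2 A B C D *v v) $ 5 = C$1$1* v$1 + C$1$2* v$2 + C$1$3* v$3 + D$1$1* v$4 + D$1$2* v$5 + D$1$3* v$6"
  "(block2x2 A B C D *v v) $ 6 = C$2$1* v$1 + C$2$2* v$2 + C$2$3* v$3 + D$2$1* v$4 + D$2$2* v$5 + D$2$3* v$6"
  "(block2x2 A B C D *v v) $ 7 = C$3$1* v$1 + C$3$2* v$2 + C$3$3* v$3 + D$3$1* v$4 + D$3$2* v$5 + D$3$3* v$6"
  "(block2x2 A B C D *v v) $ 8 = C$4$1* v$1 + C$4$2* v$2 + C$4$3* v$3 + D$4$1* v$4 + D$4$2* v$5 + D$4$3* v$6"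
  by (simp_all add: block2x2_def matrix_vector_mult_def sum_6 blk_row_def)

lemma Qr_inj:
  assumes u: "is_unit_quat r" and ne: "r \<noteq> qmk (-1) 0 0 0"
    and e1: "Qr r$1$1*a + Qr r$1$2*b + Qr r$1$3*c = 0"
    and e2: "Qr r$2$1*a + Qr r$2$2*b + Qr r$2$3*c = 0"
    and e3: "Qr r$3$1*a + Qr r$3$2*b + Qr r$3$3*c = 0"
    and e4: "Qr r$4$1*a + Qr r$4$2*b + Qr r$4$3*c = 0"
  shows "a = 0 \<and> b = 0 \<and> c = 0"
proof (cases "nv r = 0")
  case True
  note z = qlog_zero[OF u ne True]
  show ?thesis using e2 e3 e4 by (simp add: Qr_nth z)
next
  case False
  note f = qlog_nz[OF u False]
  define N where "N = nv r"
  define A where "A = arccos (r$1)"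
  have N0: "N \<noteq> 0" using False by (simp add: N_def)
  have A0: "A > 0" using f by (simp add: A_def)
  have Qv: "Theta r = N / A" "qaxis r $ 2 = r $2 / N" "qaxis r $ 3 = r $3 / N" "qaxis r $ 4 = r $4 / N"
      using f by (simp_all add: A_def N_def)
  have d: "r$2*a + r$3*b + r$4*c = 0" using e1 by (simp add: Qr_nth)
  have "Qr r$2$1*a + Qr r$2$2*b + Qr r$2$3*c = Gamma r * r$2 / N^2 * (r$2*a + r$3*b + r$4*c) + Theta r * a"
    "Qr r$3$1*a + Qr r$3$2*b + Qr r$3$3*c = Gamma r * r$3 / N^2 * (r$2*a + r$3*b + r$4*c) + Theta r * b"
    "Qr r$4$1*a + Qr r$4$2*b + Qr r$4$3*c = Gamma r * r$4 / N^2 * (r$2*a + r$3*b + r$4*c) + Theta r * c"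
    using N0 by (simp_all only: Qr_nth Qv(2-4)) (simp_all add: field_simps power2_eq_square)
  hence "Theta r * a = 0" "Theta r * b = 0" "Theta r * c = 0"
    using e2 e3 e4 d by simp_all
  moreover have "Theta r \<noteq> 0" using N0 A0 by (simp add: Qv)
  ultimately show ?thesis by simp
qed

lemma Hm_inj:
  assumes s: "(r1)^2+(r2)^2+(r3)^2+(r4)^2 = (1::real)"
    and "- r2*a - r3*b - r4*c = 0" "r1*a + r4*b - r3*c = 0" "- r4*a + r1*b + r2*c = 0" "r3*a - r2*b + r1*c = 0"
  shows "a = 0 \<and> b = 0 \<and> c = 0"
proof -
  have "(- r2*a - r3*b - r4*c)^2 + (r1*a + r4*b - r3*c)^2 + (- r4*a + r1*b + r2*c)^2 + (r3*a - r2*b + r1*c)^2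
     = ((r1)^2+(r2)^2+(r3)^2+(r4)^2) * (a^2+b^2+c^2)"
    by (simp add: power2_eq_square algebra_simps)
  hence "a^2+b^2+c^2 = 0" using assms by simp
  thus ?thesis by (simp add: add_nonneg_eq_0_iff)
qed

lemma inj_kernel: "(\<And>x. (A::real^'n^'m) *v x = 0 \<Longrightarrow> x = 0) \<Longrightarrow> inj ((*v) A)"
  by (metis linear_injective_0 matrix_vector_mul_linear)

lemma pinv_left:
  fixes A :: "real^'n^'m"
  assumes k: "\<And>x. A *v x = 0 \<Longrightarrow> x = 0"
  shows "pinv A ** A = mat 1"
proof -
  define M where "M = transpose A ** A"
  have "M *v x = 0 \<Longrightarrow> x = 0" for x
  proof -
    assume "M *v x = 0"
    hence "inner x (M *v x) = 0" by simp
    moreover have "inner x (M *v x) = inner (A *v x) (A *v x)"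
      by (simp add: M_def matrix_vector_mul_assoc[symmetric] dot_lmul_matrix[symmetric] inner_commute)
    ultimately have "A *v x = 0" by simp
    thus "x = 0" by (rule k)
  qed
  hence "inj ((*v) M)" by (rule inj_kernel)
  hence "\<exists>B. B ** M = mat 1" by (simp add: matrix_left_invertible_injective)
  hence "invertible M" by (simp add: invertible_left_inverse)
  hence "matrix_inv M ** M = mat 1" unfolding matrix_inv_def invertible_def by (rule someI_ex[THEN conjunct2])
  thus ?thesis by (simp add: pinv_def M_def matrix_mul_assoc)
qed

theorem theorem4:
  fixes r p :: "real \<Rightarrow> quat" and t :: real and ydot :: "real^6"
  assumes unit: "\<And>s. is_unit_quat (r s)"
    and pure: "\<And>s. is_pure (p s)"
    and phi_range: "\<And>s. r s \<noteq> qmk (-1) 0 0 0"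
    and ydiff: "((\<lambda>s. vec6 (dq_log (dq_of (r s) (p s)))) has_vector_derivative ydot) (at t)"
  shows "((\<lambda>s. vec8 (dq_of (r s) (p s))) has_vector_derivative
            (Q8 (dq_of (r t) (p t)) *v ydot)) (at t)
       \<and> rank (Q8 (dq_of (r t) (p t))) = 6
       \<and> pinv (Q8 (dq_of (r t) (p t))) ** Q8 (dq_of (r t) (p t)) = mat 1
       \<and> (Q8 (dq_of (r t) (p t)) *v ydot = 0 \<longleftrightarrow> ydot = 0)"
proof -
  have Yd: "((\<lambda>s. vec6 (dq_log (dq_of (r s) (p s))) $ i) has_real_derivative ydot $ i) (at t)" for i
    using ydiff unfolding vec_deriv_iff by blast
  have e1: "((\<lambda>s. qlog (r s) $ 2) has_real_derivative ydot$1) (at t)"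
    using Yd[of 1] by (simp add: Y_eq[OF unit])
  have e2: "((\<lambda>s. qlog (r s) $ 3) has_real_derivative ydot$2) (at t)"
    using Yd[of 2] by (simp add: Y_eq[OF unit])
  have e3: "((\<lambda>s. qlog (r s) $ 4) has_real_derivative ydot$3) (at t)"
    using Yd[of 3] by (simp add: Y_eq[OF unit])
  have pd: "((\<lambda>s. p s $ k) has_real_derivative 2 * d) (at t)"
    if "((\<lambda>s. p s $ k / 2) has_real_derivative d) (at t)" for k d
    using DERIV_cmult[OF that, of 2] by simp
  have P2: "((\<lambda>s. p s $ 2) has_real_derivative 2 * ydot$4) (at t)"
    using Yd[of 4] by (intro pd) (simp add: Y_eq[OF unit])
  have P3: "((\<lambda>s. p s $ 3) has_real_derivative 2 * ydot$5) (at t)"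
    using Yd[of 5] by (intro pd) (simp add: Y_eq[OF unit])
  have P4: "((\<lambda>s. p s $ 4) has_real_derivative 2 * ydot$6) (at t)"
    using Yd[of 6] by (intro pd) (simp add: Y_eq[OF unit])
  have p1: "p s $ 1 = 0" for s using pure[of s] by (simp add: is_pure_def)
  have P1: "((\<lambda>s. p s $ 1) has_real_derivative 0) (at t)" by (simp add: p1)
  note RD = r_deriv[OF unit phi_range e1 e2 e3]
  have R1: "((\<lambda>s. r s $ 1) has_real_derivative (Qr (r t)$1$1*ydot$1 + Qr (r t)$1$2*ydot$2 + Qr (r t)$1$3*ydot$3)) (at t)"
    using RD by blast
  have R2: "((\<lambda>s. r s $ 2) has_real_derivative (Qr (r t)$2$1*ydot$1 + Qr (r t)$2$2*ydot$2 + Qr (r t)$2$3*ydot$3)) (at t)"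
    using RD by blast
  have R3: "((\<lambda>s. r s $ 3) has_real_derivative (Qr (r t)$3$1*ydot$1 + Qr (r t)$3$2*ydot$2 + Qr (r t)$3$3*ydot$3)) (at t)"
    using RD by blast
  have R4: "((\<lambda>s. r s $ 4) has_real_derivative (Qr (r t)$4$1*ydot$1 + Qr (r t)$4$2*ydot$2 + Qr (r t)$4$3*ydot$3)) (at t)"
    using RD by blast
  have G1: "((\<lambda>s. vec8 (dq_of (r s) (p s))) has_vector_derivative
            (Q8 (dq_of (r t) (p t)) *v ydot)) (at t)"
    unfolding vec_deriv_iff forall_8 Q8_eq[OF unit]
    apply (simp only: blk_mv)
    apply (simp add: vec8_def dq_of_def qmult_def Hplus4_def Hminus4_def Qp_def matrix_matrix_mult_def sum_4 p1)
    apply (intro conjI)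
           apply (rule R1)
          apply (rule R2)
         apply (rule R3)
        apply (rule R4)
       apply ((rule derivative_eq_intros R1 R2 R3 R4 P2 P3 P4 refl | (simp; fail))+, simp add: field_simps)
      apply ((rule derivative_eq_intros R1 R2 R3 R4 P2 P3 P4 refl | (simp; fail))+, simp add: field_simps)
     apply ((rule derivative_eq_intros R1 R2 R3 R4 P2 P3 P4 refl | (simp; fail))+, simp add: field_simps)
    apply ((rule derivative_eq_intros R1 R2 R3 R4 P2 P3 P4 refl | (simp; fail))+, simp add: field_simps)
    done
  have kern: "v = 0" if h: "Q8 (dq_of (r t) (p t)) *v v = 0" for v
  proof -
    have c: "(Q8 (dq_of (r t) (p t)) *v v) $ i = 0" for i using h by simp
    note cc = c[of 1] c[of 2] c[of 3] c[of 4] c[of 5] c[of 6] c[of 7] c[of 8]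
    note cs = cc[unfolded Q8_eq[OF unit] blk_mv]
    have v123: "v$1 = 0 \<and> v$2 = 0 \<and> v$3 = 0"
      by (rule Qr_inj[OF unit phi_range]) (use cs in simp_all)
    have "v$4 = 0 \<and> v$5 = 0 \<and> v$6 = 0"
      by (rule Hm_inj[OF unit_sq[OF unit]])
         (use cs v123 in \<open>simp_all add: Hminus4_def Qp_def matrix_matrix_mult_def sum_4\<close>)
    with v123 show "v = 0" by (simp add: vec_eq_iff forall_6)
  qed
  have inj: "inj ((*v) (Q8 (dq_of (r t) (p t))))" by (rule inj_kernel) (rule kern)
  have G2: "rank (Q8 (dq_of (r t) (p t))) = 6" using inj full_rank_injective[of "Q8 (dq_of (r t) (p t))"] by simp
  have G3: "pinv (Q8 (dq_of (r t) (p t))) ** Q8 (dq_of (r t) (p t)) = mat 1"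
    by (rule pinv_left) (rule kern)
  have G4: "Q8 (dq_of (r t) (p t)) *v ydot = 0 \<longleftrightarrow> ydot = 0"
    using kern by auto
  show ?thesis using G1 G2 G3 G4 by blast
qed

end
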